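(* Assuming all locks are fair and the underlying system scheduler is fair, in the algorithm KSFTM every transaction either commits or aborts in finite time.
   Context: Algorithm KSFTM (parameters: integer $K\ge1$, constants $C>0$, $incVal\ge1$). A global atomic counter, initially 1. Each t-object $x$ stores at most $K$ versions $\langle ts, val, rl, vrt\rangle$. Each transaction $T_i$ has timestamps $its_i, cts_i, wts_i = cts_i + C(cts_i-its_i)$, limits $tltl_i, tutl_i$, a commit time $ct_i$, a flag $valid_i$ and a status, protected by a per-transaction lock; each t-object has a lock. A transaction executes begin, then finitely many reads/writes, then tryC (or aborts earlier when an operation returns abort). begin: reads and atomically increments the counter, initializes the transaction's fields. read($x$): if $x$ is local returns it; otherwise acquires the lock of $x$ and then that of $T_i$, finds the version with largest $ts<wts_i$ and the one with smallest $ts>wts_i$, updates $tltl_i,tutl_i$, possibly aborts (releasing locks), otherwise records the read, releases the locks and returns. write: stores locally. tryC: acquires the locks of the t-objects of its write set in a fixed global order, then the locks of the relevant reading transactions and its own in a fixed global order; performs loops only over the finite write set and finite reader lists (validation, aborting or marking conflicting transactions, updating limits, incrementing the counter, installing new versions); releases all locks and returns commit or abort. Fairness of a scheduler means no thread is forever delayed or crashed; a fair lock is eventually granted to every requester. *)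

theory Defs
  imports Main "HOL-Library.Product_Lexorder"
begin

text \<open>
  An abstract operational model of the control and locking structure of the
  algorithm KSFTM.  Threads (a finite set, type 'th) execute transactions one
  after the other; the n-th transaction of thread th has identifier (th, n).
  The program of a transaction is a finite list of read / write operations on
  t-objects; (prog th n = None) means that thread th runs no n-th transaction.
  Data-dependent decisions of KSFTM (which versions are found, whether a read
  or tryC aborts, which readers are relevant, how many iterations the finite
  loops inside a critical section take) are left nondeterministic, so every
  behaviour of KSFTM is a behaviour of this model.
\<close>

datatype 'obj op = Rd 'obj | Wr 'obj

type_synonym 'th tid = "'th \<times> nat"

datatype ('obj, 'th) lock = ObjL 'obj | TxL "'th tid"

datatype outcome = Committed | Aborted

datatype ('obj, 'th) lpc =
    Idle                              \<comment> \<open>current transaction not yet begun\<close>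
  | Ready nat                         \<comment> \<open>next operation index\<close>
  | RdLockObj nat 'obj                \<comment> \<open>read(x): requesting lock of x\<close>
  | RdLockTx nat 'obj                 \<comment> \<open>read(x): holding x, requesting own lock\<close>
  | RdCS nat 'obj nat                 \<comment> \<open>read(x): in critical section, remaining steps\<close>
  | CLockObj "'obj list"              \<comment> \<open>tryC: object locks still to acquire\<close>
  | CLockTx "'th tid list"            \<comment> \<open>tryC: transaction locks still to acquire\<close>
  | CCS nat                           \<comment> \<open>tryC: in critical section, remaining steps\<close>
  | Finished                          \<comment> \<open>thread has no further transaction\<close>

record ('obj, 'th) gstate =
  txn     :: "'th \<Rightarrow> nat"                         \<comment> \<open>index of current transaction\<close>
  lpc     :: "'th \<Rightarrow> ('obj, 'th) lpc"
  holder  :: "('obj, 'th) lock \<Rightarrow> 'th option"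
  counter :: nat
  cts     :: "'th tid \<Rightarrow> nat"                     \<comment> \<open>timestamp obtained in begin\<close>
  result  :: "'th tid \<Rightarrow> outcome option"

definition init_state :: "('obj, 'th) gstate" where
  "init_state = \<lparr> txn = (\<lambda>_. 0), lpc = (\<lambda>_. Idle), holder = (\<lambda>_. None),
                  counter = 1, cts = (\<lambda>_. 0), result = (\<lambda>_. None) \<rparr>"

definition write_objs :: "'obj op list \<Rightarrow> 'obj set" where
  "write_objs ops = {x. Wr x \<in> set ops}"

definition acquire :: "'th \<Rightarrow> ('obj, 'th) lock \<Rightarrow> ('obj, 'th) gstate \<Rightarrow> ('obj, 'th) gstate" where
  "acquire th l s = s\<lparr>holder := (holder s)(l := Some th)\<rparr>"

definition release_all :: "'th \<Rightarrow> ('obj, 'th) gstate \<Rightarrow> ('obj, 'th) gstate" where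
  "release_all th s = s\<lparr>holder := (\<lambda>l. if holder s l = Some th then None else holder s l)\<rparr>"

definition set_lpc :: "'th \<Rightarrow> ('obj, 'th) lpc \<Rightarrow> ('obj, 'th) gstate \<Rightarrow> ('obj, 'th) gstate" where
  "set_lpc th p s = s\<lparr>lpc := (lpc s)(th := p)\<rparr>"

definition finish :: "'th \<Rightarrow> outcome \<Rightarrow> ('obj, 'th) gstate \<Rightarrow> ('obj, 'th) gstate" where
  "finish th r s = s\<lparr>result := (result s)((th, txn s th) := Some r),
                     txn := (txn s)(th := Suc (txn s th)),
                     lpc := (lpc s)(th := Idle)\<rparr>"

text \<open>One atomic step of thread th (locks: objects before transactions; within each
  kind in the linear order of the type, which is the fixed global order).\<close>
inductive step :: "('th \<Rightarrow> nat \<Rightarrow> 'obj op list option) \<Rightarrow> 'th::linorder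
                    \<Rightarrow> ('obj::linorder, 'th) gstate \<Rightarrow> ('obj, 'th) gstate \<Rightarrow> bool"
  for prog where
  no_more: "lpc s th = Idle \<Longrightarrow> prog th (txn s th) = None \<Longrightarrow>
      step prog th s (set_lpc th Finished s)"
| tx_begin: "lpc s th = Idle \<Longrightarrow> prog th (txn s th) = Some ops \<Longrightarrow>
      step prog th s (set_lpc th (Ready 0)
         (s\<lparr>counter := Suc (counter s), cts := (cts s)((th, txn s th) := counter s)\<rparr>))"
| tx_write: "lpc s th = Ready k \<Longrightarrow> prog th (txn s th) = Some ops \<Longrightarrow> k < length ops \<Longrightarrow>
      ops ! k = Wr x \<Longrightarrow> step prog th s (set_lpc th (Ready (Suc k)) s)"
| read_local: "lpc s th = Ready k \<Longrightarrow> prog th (txn s th) = Some ops \<Longrightarrow> k < length ops \<Longrightarrow>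
      ops ! k = Rd x \<Longrightarrow> Wr x \<in> set (take k ops) \<Longrightarrow>
      step prog th s (set_lpc th (Ready (Suc k)) s)"
| read_start: "lpc s th = Ready k \<Longrightarrow> prog th (txn s th) = Some ops \<Longrightarrow> k < length ops \<Longrightarrow>
      ops ! k = Rd x \<Longrightarrow> Wr x \<notin> set (take k ops) \<Longrightarrow>
      step prog th s (set_lpc th (RdLockObj k x) s)"
| read_lock_obj: "lpc s th = RdLockObj k x \<Longrightarrow> holder s (ObjL x) = None \<Longrightarrow>
      step prog th s (set_lpc th (RdLockTx k x) (acquire th (ObjL x) s))"
| read_lock_tx: "lpc s th = RdLockTx k x \<Longrightarrow> holder s (TxL (th, txn s th)) = None \<Longrightarrow>
      step prog th s (set_lpc th (RdCS k x n) (acquire th (TxL (th, txn s th)) s))"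
| read_cs: "lpc s th = RdCS k x (Suc n) \<Longrightarrow> step prog th s (set_lpc th (RdCS k x n) s)"
| read_ret: "lpc s th = RdCS k x 0 \<Longrightarrow>
      step prog th s (set_lpc th (Ready (Suc k)) (release_all th s))"
| read_abort: "lpc s th = RdCS k x 0 \<Longrightarrow>
      step prog th s (finish th Aborted (release_all th s))"
| tryc_start: "lpc s th = Ready k \<Longrightarrow> prog th (txn s th) = Some ops \<Longrightarrow> k = length ops \<Longrightarrow>
      step prog th s (set_lpc th (CLockObj (sorted_list_of_set (write_objs ops))) s)"
| tryc_lock_obj: "lpc s th = CLockObj (x # xs) \<Longrightarrow> holder s (ObjL x) = None \<Longrightarrow>
      step prog th s (set_lpc th (CLockObj xs) (acquire th (ObjL x) s))"
| tryc_readers: "lpc s th = CLockObj [] \<Longrightarrow> finite R \<Longrightarrow>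
      step prog th s (set_lpc th (CLockTx (sorted_list_of_set (insert (th, txn s th) R))) s)"
| tryc_lock_tx: "lpc s th = CLockTx (u # us) \<Longrightarrow> holder s (TxL u) = None \<Longrightarrow>
      step prog th s (set_lpc th (CLockTx us) (acquire th (TxL u) s))"
| tryc_enter: "lpc s th = CLockTx [] \<Longrightarrow> step prog th s (set_lpc th (CCS n) s)"
| tryc_cs: "lpc s th = CCS (Suc n) \<Longrightarrow> step prog th s (set_lpc th (CCS n) s)"
| tryc_commit: "lpc s th = CCS 0 \<Longrightarrow>
      step prog th s (finish th Committed (release_all th (s\<lparr>counter := Suc (counter s)\<rparr>)))"
| tryc_abort: "lpc s th = CCS 0 \<Longrightarrow>
      step prog th s (finish th Aborted (release_all th s))"

text \<open>An execution: a state sequence with a schedule; None = no thread moves.\<close>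
definition execution ::
  "('th \<Rightarrow> nat \<Rightarrow> 'obj op list option) \<Rightarrow> (nat \<Rightarrow> ('obj::linorder, 'th::linorder) gstate)
    \<Rightarrow> (nat \<Rightarrow> 'th option) \<Rightarrow> bool" where
  "execution prog \<sigma> sch \<longleftrightarrow> \<sigma> 0 = init_state \<and>
     (\<forall>i. case sch i of None \<Rightarrow> \<sigma> (Suc i) = \<sigma> i
                      | Some th \<Rightarrow> step prog th (\<sigma> i) (\<sigma> (Suc i)))"

definition enabled :: "('th \<Rightarrow> nat \<Rightarrow> 'obj op list option) \<Rightarrow> 'th::linorder
                        \<Rightarrow> ('obj::linorder, 'th) gstate \<Rightarrow> bool" where
  "enabled prog th s \<longleftrightarrow> (\<exists>s'. step prog th s s')"

definition fair_scheduler ::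
  "('th \<Rightarrow> nat \<Rightarrow> 'obj op list option) \<Rightarrow> (nat \<Rightarrow> ('obj::linorder, 'th::linorder) gstate)
    \<Rightarrow> (nat \<Rightarrow> 'th option) \<Rightarrow> bool" where
  "fair_scheduler prog \<sigma> sch \<longleftrightarrow>
     (\<forall>th i. (\<forall>j\<ge>i. enabled prog th (\<sigma> j)) \<longrightarrow> (\<exists>j\<ge>i. sch j = Some th))"

definition requests :: "'th \<Rightarrow> ('obj, 'th) lock \<Rightarrow> ('obj, 'th) gstate \<Rightarrow> bool" where
  "requests th l s \<longleftrightarrow>
     (\<exists>k x. lpc s th = RdLockObj k x \<and> l = ObjL x) \<or>
     (\<exists>k x. lpc s th = RdLockTx k x \<and> l = TxL (th, txn s th)) \<or>
     (\<exists>x xs. lpc s th = CLockObj (x # xs) \<and> l = ObjL x) \<or>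
     (\<exists>u us. lpc s th = CLockTx (u # us) \<and> l = TxL u)"

text \<open>Fair locks: a lock is eventually granted to every requester, i.e. a thread that
  keeps requesting a lock which is free again and again eventually obtains it.\<close>
definition fair_locks ::
  "(nat \<Rightarrow> ('obj, 'th) gstate) \<Rightarrow> (nat \<Rightarrow> 'th option) \<Rightarrow> bool" where
  "fair_locks \<sigma> sch \<longleftrightarrow>
     (\<forall>th l i. (\<forall>j\<ge>i. requests th l (\<sigma> j)) \<longrightarrow> (\<forall>k. \<exists>j\<ge>k. holder (\<sigma> j) l = None)
               \<longrightarrow> (\<exists>j\<ge>i. sch j = Some th))"

end

theory Submission
  imports Defs
begin

definition progok :: "('th \<Rightarrow> nat \<Rightarrow> 'obj::linorder op list option) \<Rightarrow> 'th::linorder \<Rightarrow> ('obj,'th) lpc \<Rightarrow> nat \<Rightarrow> bool" where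
  "progok prog u p tn = (case p of
     Ready k \<Rightarrow> (\<exists>ops. prog u tn = Some ops \<and> k \<le> length ops)
   | RdLockObj k x \<Rightarrow> (\<exists>ops. prog u tn = Some ops \<and> k < length ops)
   | RdLockTx k x \<Rightarrow> (\<exists>ops. prog u tn = Some ops \<and> k < length ops)
   | RdCS k x n \<Rightarrow> (\<exists>ops. prog u tn = Some ops \<and> k < length ops)
   | CLockObj xs \<Rightarrow> sorted xs \<and> distinct xs
   | CLockTx us \<Rightarrow> sorted us \<and> distinct us
   | _ \<Rightarrow> True)"

definition heldok :: "('obj::linorder,'th::linorder) lpc \<Rightarrow> ('obj,'th) lock \<Rightarrow> bool" where
  "heldok p l = (case p of
     Idle \<Rightarrow> False | Finished \<Rightarrow> False | Ready k \<Rightarrow> False | RdLockObj k x \<Rightarrow> False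
   | RdLockTx k x \<Rightarrow> l = ObjL x
   | RdCS k x n \<Rightarrow> True | CCS n \<Rightarrow> True
   | CLockObj xs \<Rightarrow> (\<exists>y. l = ObjL y \<and> (\<forall>z\<in>set xs. y < z))
   | CLockTx us \<Rightarrow> (\<exists>y. l = ObjL y) \<or> (\<exists>v. l = TxL v \<and> (\<forall>w\<in>set us. v < w)))"

definition InvT where
  "InvT prog s u \<longleftrightarrow> progok prog u (lpc s u) (txn s u) \<and>
     (\<forall>l. holder s l = Some u \<longrightarrow> heldok (lpc s u) l)"

lemma step_other:
  assumes "step prog t s s'" "u \<noteq> t"
  shows "lpc s' u = lpc s u \<and> txn s' u = txn s u \<and> (\<forall>l. holder s' l = Some u \<longrightarrow> holder s l = Some u)"
  using assms
  by (induction rule: step.induct)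
     (auto simp: set_lpc_def acquire_def release_all_def finish_def)

lemma InvT_other:
  assumes "step prog t s s'" "u \<noteq> t" "InvT prog s u"
  shows "InvT prog s' u"
  using step_other[OF assms(1,2)] assms(3) unfolding InvT_def by metis

lemma InvT_own:
  assumes "step prog t s s'" "InvT prog s t"
  shows "InvT prog s' t"
  using assms
proof (induction rule: step.induct)
  case (tryc_lock_obj s th x xs)
  then have "\<forall>w\<in>set xs. x < w" by (auto simp: InvT_def progok_def intro: order_le_neq_trans)
  then show ?case using tryc_lock_obj
    by (auto simp: InvT_def progok_def heldok_def set_lpc_def acquire_def)
next
  case (tryc_lock_tx s th u us)
  then have "\<forall>w\<in>set us. u < w" by (auto simp: InvT_def progok_def intro: order_le_neq_trans)
  then show ?case using tryc_lock_tx
    by (auto simp: InvT_def progok_def heldok_def set_lpc_def acquire_def simp del: split_paired_Ex)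
next
  case (tryc_readers s th R)
  define L where "L = sorted_list_of_set (insert (th, txn s th) R)"
  have L: "sorted L" "distinct L" unfolding L_def
    by (simp_all only: sorted_sorted_list_of_set distinct_sorted_list_of_set)
  show ?case unfolding L_def[symmetric] using tryc_readers L
    by (auto simp: InvT_def progok_def heldok_def set_lpc_def)
qed (auto simp: InvT_def progok_def heldok_def set_lpc_def acquire_def release_all_def finish_def)


lemma Inv_init: "InvT prog init_state u"
  by (simp add: InvT_def init_state_def progok_def)

definition key :: "('obj::linorder,'th::linorder) lock \<Rightarrow> nat \<times> 'obj \<times> ('th \<times> nat)" where
  "key l = (case l of ObjL x \<Rightarrow> (0, x, undefined) | TxL u \<Rightarrow> (1, undefined, u))"

lemma req_key:
  assumes "InvT prog s t" "requests t l s" "holder s l' = Some t"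
  shows "key l' < key l"
  using assms
  by (cases l') (auto simp: InvT_def requests_def heldok_def key_def less_prod_def)

lemma requests_unique:
  assumes "requests t l s" "requests t l' s" shows "l = l'"
  using assms by (auto simp: requests_def)

lemma requests_cong:
  assumes "requests t l s" "lpc s' t = lpc s t" "txn s' t = txn s t"
  shows "requests t l s'"
  using assms by (auto simp: requests_def)

definition isEn :: "('obj,'th) lpc \<Rightarrow> bool" where
  "isEn p = (case p of Ready _ \<Rightarrow> True | RdCS _ _ _ \<Rightarrow> True | CLockObj [] \<Rightarrow> True
     | CLockTx [] \<Rightarrow> True | CCS _ \<Rightarrow> True | _ \<Rightarrow> False)"

lemma enabled_isEn:
  assumes "InvT prog s t" "isEn (lpc s t)"
  shows "enabled prog t s"
proof (cases "lpc s t")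
  case (Ready k)
  then obtain ops where ops: "prog t (txn s t) = Some ops" "k \<le> length ops"
    using assms by (auto simp: InvT_def progok_def)
  show ?thesis
  proof (cases "k = length ops")
    case True
    then show ?thesis unfolding enabled_def using Ready ops by (blast intro: step.tryc_start)
  next
    case False
    then have kl: "k < length ops" using ops by simp
    show ?thesis
    proof (cases "ops ! k")
      case (Rd x)
      then show ?thesis unfolding enabled_def using Ready ops kl
        by (cases "Wr x \<in> set (take k ops)") (blast intro: step.read_local step.read_start)+
    next
      case (Wr x)
      then show ?thesis unfolding enabled_def using Ready ops kl by (blast intro: step.tx_write)
    qed
  qed
next
  case (RdCS k x n)
  then show ?thesis unfolding enabled_def
    by (cases n) (blast intro: step.read_cs step.read_ret)+
next
  case (CLockObj xs)
  then have "xs = []" using assms(2) by (auto simp: isEn_def split: list.splits)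
  then show ?thesis unfolding enabled_def using CLockObj
    by (blast intro: step.tryc_readers[where R="{}"])
next
  case (CLockTx us)
  then have "us = []" using assms(2) by (auto simp: isEn_def split: list.splits)
  then show ?thesis unfolding enabled_def using CLockTx
    by (blast intro: step.tryc_enter)
next
  case (CCS n)
  then show ?thesis unfolding enabled_def
    by (cases n) (blast intro: step.tryc_cs step.tryc_commit)+
qed (use assms(2) in \<open>auto simp: isEn_def\<close>)

lemma notEn_requests:
  assumes "\<not> isEn (lpc s t)" "lpc s t \<noteq> Idle" "lpc s t \<noteq> Finished"
  shows "\<exists>l. requests t l s"
  using assms
  by (cases "lpc s t") (auto simp: isEn_def requests_def split: list.splits)

definition mu :: "('th \<Rightarrow> nat \<Rightarrow> 'obj op list option) \<Rightarrow> ('obj,'th) gstate \<Rightarrow> 'th \<Rightarrow> nat \<times> nat \<times> nat" where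
  "mu prog s t = (let len = length (the (prog t (txn s t))) in
     case lpc s t of
       Ready k \<Rightarrow> (Suc len - k, 4, 0)
     | RdLockObj k x \<Rightarrow> (Suc len - k, 3, 0)
     | RdLockTx k x \<Rightarrow> (Suc len - k, 2, 0)
     | RdCS k x n \<Rightarrow> (Suc len - k, 1, n)
     | CLockObj xs \<Rightarrow> (0, 3, length xs)
     | CLockTx us \<Rightarrow> (0, 2, length us)
     | CCS n \<Rightarrow> (0, 1, n)
     | _ \<Rightarrow> (0, 0, 0))"

lemma mu_dec:
  assumes "step prog t s s'" "InvT prog s t" "txn s' t = txn s t"
    "lpc s t \<noteq> Idle" "lpc s t \<noteq> Finished"
  shows "mu prog s' t < mu prog s t"
  using assms
  by (induction rule: step.induct)
     (auto simp: mu_def InvT_def progok_def less_prod_def set_lpc_def acquire_def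
        release_all_def finish_def Let_def)

lemma nonidle_pres:
  assumes "step prog u s s'" "txn s' t = txn s t" "lpc s t \<noteq> Idle" "lpc s t \<noteq> Finished"
  shows "lpc s' t \<noteq> Idle \<and> lpc s' t \<noteq> Finished"
  using assms
  by (induction rule: step.induct)
     (auto simp: set_lpc_def acquire_def release_all_def finish_def)

lemma holder_stable:
  assumes "step prog u s s'" "holder s l \<noteq> None" "holder s' l \<noteq> None"
  shows "holder s' l = holder s l"
  using assms
  by (induction rule: step.induct)
     (auto simp: set_lpc_def acquire_def release_all_def finish_def)

lemma txn_change:
  assumes "step prog u s s'" "txn s' t \<noteq> txn s t"
  shows "u = t \<and> (\<forall>l. holder s' l \<noteq> Some t) \<and> result s' (t, txn s t) \<noteq> None"
  using assms
  by (induction rule: step.induct)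
     (auto simp: set_lpc_def acquire_def release_all_def finish_def split: if_splits)


context
  fixes prog :: "'th::{finite,linorder} \<Rightarrow> nat \<Rightarrow> 'obj::linorder op list option"
    and \<sigma> :: "nat \<Rightarrow> ('obj, 'th) gstate"
    and sch :: "nat \<Rightarrow> 'th option"
  assumes ex: "execution prog \<sigma> sch"
    and fs: "fair_scheduler prog \<sigma> sch"
    and fl: "fair_locks \<sigma> sch"
begin

lemma casej: "case sch j of None \<Rightarrow> \<sigma> (Suc j) = \<sigma> j | Some th \<Rightarrow> step prog th (\<sigma> j) (\<sigma> (Suc j))"
  using ex unfolding execution_def by blast

lemma stepj: "sch j = Some t \<Longrightarrow> step prog t (\<sigma> j) (\<sigma> (Suc j))"
  using casej[of j] by simp

lemma nonej: "sch j = None \<Longrightarrow> \<sigma> (Suc j) = \<sigma> j"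
  using casej[of j] by simp

lemma inv: "InvT prog (\<sigma> j) u"
proof (induction j)
  case 0
  then show ?case using ex Inv_init unfolding execution_def by metis
next
  case (Suc j)
  show ?case
  proof (cases "sch j")
    case None
    then show ?thesis using Suc nonej by simp
  next
    case (Some t)
    show ?thesis
    proof (cases "u = t")
      case True then show ?thesis using InvT_own[OF stepj[OF Some]] Suc by simp
    next
      case False then show ?thesis using InvT_other[OF stepj[OF Some]] Suc by simp
    qed
  qed
qed

lemma unch: "sch j \<noteq> Some t \<Longrightarrow> lpc (\<sigma> (Suc j)) t = lpc (\<sigma> j) t \<and> txn (\<sigma> (Suc j)) t = txn (\<sigma> j) t"
proof (cases "sch j")
  case None then show ?thesis using nonej by simp
next
  case (Some a)
  assume "sch j \<noteq> Some t"
  then have "a \<noteq> t" using Some by simp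
  then show ?thesis using step_other[OF stepj[OF Some], of t] by auto
qed

lemma hstable: "holder (\<sigma> j) l \<noteq> None \<Longrightarrow> holder (\<sigma> (Suc j)) l \<noteq> None \<Longrightarrow>
    holder (\<sigma> (Suc j)) l = holder (\<sigma> j) l"
  by (cases "sch j") (auto dest: nonej stepj holder_stable)

lemma txnch: "txn (\<sigma> (Suc j)) t \<noteq> txn (\<sigma> j) t \<Longrightarrow>
   (\<forall>l. holder (\<sigma> (Suc j)) l \<noteq> Some t) \<and> result (\<sigma> (Suc j)) (t, txn (\<sigma> j) t) \<noteq> None"
  by (cases "sch j") (auto dest: nonej stepj txn_change)

lemma mu_cong: "lpc s' t = lpc s t \<Longrightarrow> txn s' t = txn s t \<Longrightarrow> mu prog s' t = mu prog s t"
  by (simp add: mu_def)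

lemma frozen:
  assumes txc: "\<forall>j\<ge>i. txn (\<sigma> j) t = txn (\<sigma> i) t"
    and ni: "lpc (\<sigma> i) t \<noteq> Idle" "lpc (\<sigma> i) t \<noteq> Finished"
  shows "\<exists>i0\<ge>i. \<exists>l B. \<forall>j\<ge>i0. requests t l (\<sigma> j) \<and> holder (\<sigma> j) l = Some B"
proof -
  have nij: "lpc (\<sigma> j) t \<noteq> Idle \<and> lpc (\<sigma> j) t \<noteq> Finished" if "i \<le> j" for j
    using that
  proof (induction j rule: dec_induct)
    case base then show ?case using ni by simp
  next
    case (step j)
    show ?case
    proof (cases "sch j")
      case None then show ?thesis using step nonej by simp
    next
      case (Some u)
      have "txn (\<sigma> (Suc j)) t = txn (\<sigma> j) t"
        using txc[rule_format, of j] txc[rule_format, of "Suc j"] step(1) by simp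
      then show ?thesis using nonidle_pres[OF stepj[OF Some]] step.IH by blast
    qed
  qed
  have txe: "txn (\<sigma> (Suc j)) t = txn (\<sigma> j) t" if "i \<le> j" for j
    using txc[rule_format, of j] txc[rule_format, of "Suc j"] that by simp
  define m where "m = (LEAST v. \<exists>j\<ge>i. v = mu prog (\<sigma> j) t)"
  have exv: "\<exists>v. \<exists>j\<ge>i. v = mu prog (\<sigma> j) t" by blast
  have "\<exists>j\<ge>i. m = mu prog (\<sigma> j) t"
    using LeastI_ex[OF exv] unfolding m_def by simp
  then obtain j0 where j0: "j0 \<ge> i" "m = mu prog (\<sigma> j0) t" by blast
  have mmin: "m \<le> mu prog (\<sigma> j) t" if "j \<ge> i" for j unfolding m_def
    by (rule Least_le[of "\<lambda>v. \<exists>j\<ge>i. v = mu prog (\<sigma> j) t"]) (use that in blast)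
  have mono: "mu prog (\<sigma> (Suc j)) t \<le> mu prog (\<sigma> j) t \<and>
      (sch j = Some t \<longrightarrow> mu prog (\<sigma> (Suc j)) t < mu prog (\<sigma> j) t)" if "j \<ge> i" for j
  proof (cases "sch j = Some t")
    case True
    then have "mu prog (\<sigma> (Suc j)) t < mu prog (\<sigma> j) t"
      using mu_dec[OF stepj[OF True] inv txe[OF that]] nij[OF that] by blast
    then show ?thesis by simp
  next
    case False
    then show ?thesis using unch[OF False] mu_cong[of "\<sigma> (Suc j)" t "\<sigma> j"] by simp
  qed
  have eqm: "mu prog (\<sigma> j) t = m" if "j \<ge> j0" for j
    using that
  proof (induction j rule: dec_induct)
    case base then show ?case using j0 by simp
  next
    case (step j)
    have "i \<le> j" using step(1) j0 by simp
    then have "mu prog (\<sigma> (Suc j)) t \<le> m" "m \<le> mu prog (\<sigma> (Suc j)) t"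
      using mono[of j] mmin[of "Suc j"] step(3) by auto
    then show ?case by simp
  qed
  have nosch: "sch j \<noteq> Some t" if "j \<ge> j0" for j
  proof
    assume a: "sch j = Some t"
    have "i \<le> j" using that j0 by simp
    then have "mu prog (\<sigma> (Suc j)) t < mu prog (\<sigma> j) t" using mono[of j] a by blast
    then show False using eqm[of j] eqm[of "Suc j"] that by simp
  qed
  have frz: "lpc (\<sigma> j) t = lpc (\<sigma> j0) t \<and> txn (\<sigma> j) t = txn (\<sigma> j0) t" if "j \<ge> j0" for j
    using that
  proof (induction j rule: dec_induct)
    case base then show ?case by simp
  next
    case (step j)
    then show ?case using unch[OF nosch[OF step(1)]] by simp
  qed
  show ?thesis
  proof (cases "isEn (lpc (\<sigma> j0) t)")
    case True
    have "\<forall>j\<ge>j0. enabled prog t (\<sigma> j)"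
    proof (intro allI impI)
      fix j assume jj: "j \<ge> j0"
      have "isEn (lpc (\<sigma> j) t)" using frz[OF jj] True by simp
      then show "enabled prog t (\<sigma> j)" by (rule enabled_isEn[OF inv])
    qed
    moreover have "(\<forall>j\<ge>j0. enabled prog t (\<sigma> j)) \<longrightarrow> (\<exists>j\<ge>j0. sch j = Some t)"
      using fs[unfolded fair_scheduler_def, THEN spec[of _ t], THEN spec[of _ j0]] .
    ultimately obtain j where "j \<ge> j0" "sch j = Some t" by blast
    with nosch show ?thesis by blast
  next
    case False
    have nj0: "lpc (\<sigma> j0) t \<noteq> Idle" "lpc (\<sigma> j0) t \<noteq> Finished" using nij[OF j0(1)] by auto
    obtain l where l: "requests t l (\<sigma> j0)" using notEn_requests[OF False nj0] by blast
    have rq: "\<forall>j\<ge>j0. requests t l (\<sigma> j)"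
    proof (intro allI impI)
      fix j assume jj: "j0 \<le> j"
      have "lpc (\<sigma> j) t = lpc (\<sigma> j0) t" "txn (\<sigma> j) t = txn (\<sigma> j0) t" using frz[OF jj] by auto
      then show "requests t l (\<sigma> j)" by (rule requests_cong[OF l])
    qed
    have "\<not> (\<forall>k. \<exists>j\<ge>k. holder (\<sigma> j) l = None)"
    proof
      assume a: "\<forall>k. \<exists>j\<ge>k. holder (\<sigma> j) l = None"
      have "(\<forall>j\<ge>j0. requests t l (\<sigma> j)) \<longrightarrow> (\<forall>k. \<exists>j\<ge>k. holder (\<sigma> j) l = None)
               \<longrightarrow> (\<exists>j\<ge>j0. sch j = Some t)"
        using fl[unfolded fair_locks_def, THEN spec[of _ t], THEN spec[of _ l], THEN spec[of _ j0]] .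
      then obtain j where "j \<ge> j0" "sch j = Some t" using a rq by blast
      then show False using nosch by blast
    qed
    then obtain k where k: "\<forall>j\<ge>k. holder (\<sigma> j) l \<noteq> None" by auto
    define i0 where "i0 = max k j0"
    have "holder (\<sigma> i0) l \<noteq> None" using k i0_def by simp
    then obtain B where B: "holder (\<sigma> i0) l = Some B" by blast
    have hB: "holder (\<sigma> j) l = Some B" if "j \<ge> i0" for j
      using that
    proof (induction j rule: dec_induct)
      case base then show ?case using B by simp
    next
      case (step j)
      then show ?case using hstable[of j l] k i0_def by simp
    qed
    have "i0 \<ge> i" using i0_def j0 by simp
    moreover have "\<forall>j\<ge>i0. requests t l (\<sigma> j) \<and> holder (\<sigma> j) l = Some B"
      using rq hB i0_def by simp
    ultimately show ?thesis by blast
  qed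
qed

lemma no_stuck:
  assumes "\<forall>j\<ge>i. txn (\<sigma> j) t = txn (\<sigma> i) t" "lpc (\<sigma> i) t \<noteq> Idle" "lpc (\<sigma> i) t \<noteq> Finished"
  shows False
proof -
  define L where "L = {l. \<exists>t i0 B. \<forall>j\<ge>i0. requests t l (\<sigma> j) \<and> holder (\<sigma> j) l = Some B}"
  have ne: "L \<noteq> {}" using frozen[OF assms] unfolding L_def by blast
  have chain: "\<exists>l'\<in>L. key l < key l'" if lL: "l \<in> L" for l
  proof -
    obtain t' i0 B where h: "\<forall>j\<ge>i0. requests t' l (\<sigma> j) \<and> holder (\<sigma> j) l = Some B"
      using lL unfolding L_def by blast
    have txB0: "txn (\<sigma> j) B = txn (\<sigma> i0) B" if "j \<ge> i0" for j
      using that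
    proof (induction j rule: dec_induct)
      case base then show ?case by simp
    next
      case (step j)
      show ?case
      proof (rule ccontr)
        assume "txn (\<sigma> (Suc j)) B \<noteq> txn (\<sigma> i0) B"
        then have "txn (\<sigma> (Suc j)) B \<noteq> txn (\<sigma> j) B" using step by simp
        then have "holder (\<sigma> (Suc j)) l \<noteq> Some B" using txnch[of j B] by blast
        then show False using h step(1) by simp
      qed
    qed
    then have txB: "\<forall>j\<ge>i0. txn (\<sigma> j) B = txn (\<sigma> i0) B" by blast
    have hl: "heldok (lpc (\<sigma> i0) B) l" using inv[of i0 B] h unfolding InvT_def by blast
    have niB: "lpc (\<sigma> i0) B \<noteq> Idle" "lpc (\<sigma> i0) B \<noteq> Finished"
      using hl by (auto simp: heldok_def)
    obtain i1 l' B' where i1: "i1 \<ge> i0" "\<forall>j\<ge>i1. requests B l' (\<sigma> j) \<and> holder (\<sigma> j) l' = Some B'"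
      using frozen[OF txB niB] by blast
    have "key l < key l'" using req_key[OF inv[of i1 B], of l' l] i1 h by auto
    moreover have "l' \<in> L" using i1 unfolding L_def by blast
    ultimately show ?thesis by blast
  qed
  have fin: "finite L"
  proof -
    define f where "f l = (SOME t. \<exists>i0 B. \<forall>j\<ge>i0. requests t l (\<sigma> j) \<and> holder (\<sigma> j) l = Some B)" for l
    have fP: "\<exists>i0 B. \<forall>j\<ge>i0. requests (f l) l (\<sigma> j) \<and> holder (\<sigma> j) l = Some B" if "l \<in> L" for l
      unfolding f_def by (rule someI_ex) (use that in \<open>simp add: L_def\<close>)
    have "inj_on f L"
    proof (rule inj_onI)
      fix a b assume a: "a \<in> L" "b \<in> L" "f a = f b"
      obtain ia Ba where ha: "\<forall>j\<ge>ia. requests (f a) a (\<sigma> j) \<and> holder (\<sigma> j) a = Some Ba"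
        using fP[OF a(1)] by blast
      obtain ib Bb where hb: "\<forall>j\<ge>ib. requests (f b) b (\<sigma> j) \<and> holder (\<sigma> j) b = Some Bb"
        using fP[OF a(2)] by blast
      have "requests (f a) a (\<sigma> (max ia ib))" "requests (f a) b (\<sigma> (max ia ib))"
        using ha hb a(3) by auto
      then show "a = b" by (rule requests_unique)
    qed
    then show ?thesis using inj_on_finite[of f L UNIV] by simp
  qed
  have "finite (key ` L)" "key ` L \<noteq> {}" using fin ne by auto
  then have "Max (key ` L) \<in> key ` L" by (rule Max_in)
  then obtain l where l: "l \<in> L" "key l = Max (key ` L)" by auto
  then obtain l' where l': "l' \<in> L" "key l < key l'" using chain by blast
  then have "key l' \<le> Max (key ` L)" using fin by (auto intro: Max_ge)
  then show False using l l' by simp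
qed

end

theorem theorem9:
  fixes prog :: "'th::{finite,linorder} \<Rightarrow> nat \<Rightarrow> 'obj::linorder op list option"
    and \<sigma> :: "nat \<Rightarrow> ('obj, 'th) gstate"
    and sch :: "nat \<Rightarrow> 'th option"
  assumes "execution prog \<sigma> sch"
    and "fair_scheduler prog \<sigma> sch"
    and "fair_locks \<sigma> sch"
    and "txn (\<sigma> i) th = n" and "lpc (\<sigma> i) th \<noteq> Idle" and "lpc (\<sigma> i) th \<noteq> Finished"
  shows "\<exists>j\<ge>i. result (\<sigma> j) (th, n) = Some Committed \<or> result (\<sigma> j) (th, n) = Some Aborted"
proof (rule ccontr)
  assume nc: "\<not> ?thesis"
  have "txn (\<sigma> j) th = txn (\<sigma> i) th" if "j \<ge> i" for j
    using that
  proof (induction j rule: dec_induct)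
    case base then show ?case by simp
  next
    case (step j)
    show ?case
    proof (rule ccontr)
      assume "txn (\<sigma> (Suc j)) th \<noteq> txn (\<sigma> i) th"
      then have "txn (\<sigma> (Suc j)) th \<noteq> txn (\<sigma> j) th" using step by simp
      moreover have "txn (\<sigma> j) th = n" using step assms(4) by simp
      ultimately have "result (\<sigma> (Suc j)) (th, n) \<noteq> None"
        using txnch[OF assms(1-3)] by blast
      then obtain r where "result (\<sigma> (Suc j)) (th, n) = Some r" by blast
      moreover have "Suc j \<ge> i" using step by simp
      ultimately show False using nc by (cases r) auto
    qed
  qed
  then show False using no_stuck[OF assms(1-3)] assms(5,6) by blast
qed

end
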